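(* Let $\mathcal O_5$ be the family of outerplanar graphs with girth at least $5$. Then every push graph whose underlying graph belongs to $\mathcal O_5$ admits a homomorphism to the directed $3$-cycle $\vec C_3$, and $\chi_p(\mathcal O_5)=3$.
   Context: An oriented graph is a directed graph with no loops and no pair of opposite arcs; an orientation of an undirected simple graph $G$ is an oriented graph obtained by orienting each edge of $G$. A homomorphism of an oriented graph $\vec G$ to an oriented graph $\vec H$ is a map $\varphi:V(\vec G)\to V(\vec H)$ with $\varphi(u)\varphi(v)$ an arc of $\vec H$ whenever $uv$ is an arc of $\vec G$. To push a vertex means to reverse all arcs incident with it. The push graph $[\vec G]$ is the set of oriented graphs obtainable from $\vec G$ by pushing some set of vertices (its presentations); its underlying graph is the common underlying graph of its presentations. A push graph $[\vec G]$ admits a homomorphism to an oriented graph $\vec H$ if some presentation of $[\vec G]$ does. The push chromatic number $\chi_p([\vec G])$ is the minimum number of vertices of an oriented graph $\vec H$ with $[\vec G]\to\vec H$; for an undirected graph $G$, $\chi_p(G)$ is the maximum of $\chi_p([\vec G])$ over all orientations $\vec G$ of $G$; for a family $\mathcal F$, $\chi_p(\mathcal F)$ is the maximum of $\chi_p(G)$ over $G\in\mathcal F$. The girth of a graph is the length of its shortest cycle (infinite for forests). *)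

theory Defs
  imports Main
begin

definition simple_graph :: "'a set \<Rightarrow> ('a \<Rightarrow> 'a \<Rightarrow> bool) \<Rightarrow> bool" where
  "simple_graph V E \<longleftrightarrow> finite V \<and> (\<forall>u v. E u v \<longrightarrow> u \<in> V \<and> v \<in> V)
     \<and> (\<forall>u v. E u v \<longrightarrow> E v u) \<and> (\<forall>u. \<not> E u u)"

text \<open>Outerplanar: the vertices can be placed in cyclic (here: linear) order on a circle
  so that the edges, drawn as chords, do not cross.\<close>
definition outerplanar :: "'a set \<Rightarrow> ('a \<Rightarrow> 'a \<Rightarrow> bool) \<Rightarrow> bool" where
  "outerplanar V E \<longleftrightarrow> (\<exists>f. bij_betw f V {0..<card V} \<and>
     (\<forall>a b c d. E a b \<and> E c d \<longrightarrow> \<not> (f a < f c \<and> f c < f b \<and> f b < f d)))"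

definition is_cycle :: "'a set \<Rightarrow> ('a \<Rightarrow> 'a \<Rightarrow> bool) \<Rightarrow> 'a list \<Rightarrow> bool" where
  "is_cycle V E cs \<longleftrightarrow> length cs \<ge> 3 \<and> distinct cs \<and> set cs \<subseteq> V
     \<and> (\<forall>i. Suc i < length cs \<longrightarrow> E (cs ! i) (cs ! Suc i))
     \<and> E (last cs) (hd cs)"

text \<open>Girth at least k (forests have infinite girth, so satisfy this for all k).\<close>
definition girth_at_least :: "'a set \<Rightarrow> ('a \<Rightarrow> 'a \<Rightarrow> bool) \<Rightarrow> nat \<Rightarrow> bool" where
  "girth_at_least V E k \<longleftrightarrow> (\<forall>cs. is_cycle V E cs \<longrightarrow> length cs \<ge> k)"

definition oriented_graph :: "'b set \<Rightarrow> ('b \<Rightarrow> 'b \<Rightarrow> bool) \<Rightarrow> bool" where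
  "oriented_graph W B \<longleftrightarrow> finite W \<and> (\<forall>u v. B u v \<longrightarrow> u \<in> W \<and> v \<in> W)
     \<and> (\<forall>u. \<not> B u u) \<and> (\<forall>u v. B u v \<longrightarrow> \<not> B v u)"

definition orientation :: "'a set \<Rightarrow> ('a \<Rightarrow> 'a \<Rightarrow> bool) \<Rightarrow> ('a \<Rightarrow> 'a \<Rightarrow> bool) \<Rightarrow> bool" where
  "orientation V E A \<longleftrightarrow> (\<forall>u v. A u v \<longrightarrow> E u v)
     \<and> (\<forall>u v. E u v \<longrightarrow> A u v \<or> A v u) \<and> (\<forall>u v. A u v \<longrightarrow> \<not> A v u)"

definition push :: "'a set \<Rightarrow> ('a \<Rightarrow> 'a \<Rightarrow> bool) \<Rightarrow> ('a \<Rightarrow> 'a \<Rightarrow> bool)" where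
  "push S A = (\<lambda>u v. if (u \<in> S) = (v \<in> S) then A u v else A v u)"

definition hom :: "'a set \<Rightarrow> ('a \<Rightarrow> 'a \<Rightarrow> bool) \<Rightarrow> 'b set \<Rightarrow> ('b \<Rightarrow> 'b \<Rightarrow> bool) \<Rightarrow> ('a \<Rightarrow> 'b) \<Rightarrow> bool" where
  "hom V A W B \<phi> \<longleftrightarrow> \<phi> ` V \<subseteq> W \<and> (\<forall>u v. A u v \<longrightarrow> B (\<phi> u) (\<phi> v))"

definition push_hom :: "'a set \<Rightarrow> ('a \<Rightarrow> 'a \<Rightarrow> bool) \<Rightarrow> 'b set \<Rightarrow> ('b \<Rightarrow> 'b \<Rightarrow> bool) \<Rightarrow> bool" where
  "push_hom V A W B \<longleftrightarrow> (\<exists>S \<subseteq> V. \<exists>\<phi>. hom V (push S A) W B \<phi>)"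

definition C3_verts :: "nat set" where "C3_verts = {0, 1, 2}"
definition C3_arcs :: "nat \<Rightarrow> nat \<Rightarrow> bool" where
  "C3_arcs u v \<longleftrightarrow> u < 3 \<and> v = (u + 1) mod 3"

text \<open>Push chromatic number of a push graph; target oriented graphs are taken with vertices
  in nat (every finite oriented graph is isomorphic to one of these).\<close>
definition push_chrom :: "'a set \<Rightarrow> ('a \<Rightarrow> 'a \<Rightarrow> bool) \<Rightarrow> nat" where
  "push_chrom V A = (LEAST k. \<exists>W B. oriented_graph (W :: nat set) B \<and> card W = k \<and> push_hom V A W B)"

definition push_chrom_graph :: "'a set \<Rightarrow> ('a \<Rightarrow> 'a \<Rightarrow> bool) \<Rightarrow> nat" where
  "push_chrom_graph V E = Sup {push_chrom V A | A. orientation V E A}"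

text \<open>The family O_5 (graphs with vertex set in nat; every finite graph is isomorphic to one).\<close>
definition O5 :: "(nat set \<times> (nat \<Rightarrow> nat \<Rightarrow> bool)) set" where
  "O5 = {(V, E). simple_graph V E \<and> outerplanar V E \<and> girth_at_least V E 5}"

definition push_chrom_family :: "(nat set \<times> (nat \<Rightarrow> nat \<Rightarrow> bool)) set \<Rightarrow> nat" where
  "push_chrom_family F = Sup {push_chrom_graph V E | V E. (V, E) \<in> F}"

end

theory Submission
  imports Defs
begin


definition NC :: "('a \<Rightarrow> nat) \<Rightarrow> ('a \<Rightarrow> 'a \<Rightarrow> bool) \<Rightarrow> bool" where
  "NC p E \<longleftrightarrow> (\<forall>a b c d. E a b \<and> E c d \<longrightarrow> \<not> (p a < p c \<and> p c < p b \<and> p b < p d))"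

lemma cyc3: "E a b \<Longrightarrow> E b c \<Longrightarrow> E c a \<Longrightarrow> distinct [a,b,c] \<Longrightarrow> {a,b,c} \<subseteq> V \<Longrightarrow> is_cycle V E [a,b,c]"
  unfolding is_cycle_def by (auto simp: less_Suc_eq nth_Cons' eval_nat_numeral)

lemma cyc4: "E a b \<Longrightarrow> E b c \<Longrightarrow> E c d \<Longrightarrow> E d a \<Longrightarrow> distinct [a,b,c,d] \<Longrightarrow> {a,b,c,d} \<subseteq> V \<Longrightarrow> is_cycle V E [a,b,c,d]"
  unfolding is_cycle_def by (auto simp: less_Suc_eq nth_Cons' eval_nat_numeral)

lemma struct_lemma:
  fixes V :: "'a set" and E p
  assumes fin: "finite V" and EV: "\<forall>u v. E u v \<longrightarrow> u \<in> V \<and> v \<in> V" and sym: "\<forall>u v. E u v \<longrightarrow> E v u"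
    and irr: "\<forall>u. \<not> E u u"
    and inj: "inj_on p V" and nc: "NC p E" and gir: "girth_at_least V E 5"
    and deg: "\<forall>x\<in>V. \<exists>y z. y \<noteq> z \<and> E x y \<and> E x z" and ne: "V \<noteq> {}"
  shows "(\<exists>a x1 x2 x3 b. E a x1 \<and> E x1 x2 \<and> E x2 x3 \<and> E x3 b \<and> E a b \<and> p a < p x1 \<and> p x1 < p x2 \<and> p x2 < p x3 \<and> p x3 < p b
           \<and> (\<forall>y. E x1 y \<longrightarrow> y = a \<or> y = x2) \<and> (\<forall>y. E x2 y \<longrightarrow> y = x1 \<or> y = x3) \<and> (\<forall>y. E x3 y \<longrightarrow> y = x2 \<or> y = b))
       \<or> (\<exists>a x1 x2 x3 x4 b. E a x1 \<and> E x1 x2 \<and> E x2 x3 \<and> E x3 x4 \<and> E x4 b \<and> p a < p x1 \<and> p x1 < p x2 \<and> p x2 < p x3 \<and> p x3 < p x4 \<and> p x4 < p b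
           \<and> (\<forall>y. E x1 y \<longrightarrow> y = a \<or> y = x2) \<and> (\<forall>y. E x2 y \<longrightarrow> y = x1 \<or> y = x3) \<and> (\<forall>y. E x3 y \<longrightarrow> y = x2 \<or> y = x4) \<and> (\<forall>y. E x4 y \<longrightarrow> y = x3 \<or> y = b))"
proof -
  have pne: "\<And>u v. E u v \<Longrightarrow> p u \<noteq> p v"
    using inj EV irr by (metis inj_on_def)
  have peq: "\<And>u v. u \<in> V \<Longrightarrow> v \<in> V \<Longrightarrow> p u = p v \<Longrightarrow> u = v"
    using inj by (meson inj_on_def)
  define P where "P = (\<lambda>(c,d). E c d \<and> p c < p d \<and> (\<exists>x\<in>V. p c < p x \<and> p x < p d))"
  have "Min (p ` V) \<in> p ` V" using fin ne by simp
  then obtain m where m: "m \<in> V" "p m = Min (p ` V)" by auto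
  have mmin: "\<forall>x\<in>V. p m \<le> p x" using m fin by simp
  from deg m obtain y z where yz: "y \<noteq> z" "E m y" "E m z" by blast
  have yV: "y \<in> V" "z \<in> V" using yz EV by auto
  have "p m \<le> p y" "p m \<le> p z" using mmin yV by auto
  moreover have "p m \<noteq> p y" "p m \<noteq> p z" using pne yz by auto
  ultimately have my: "p m < p y" "p m < p z" by auto
  have "p y \<noteq> p z" using yz yV peq by blast
  have "\<exists>q. P q"
  proof (cases "p y < p z")
    case True
    then have "P (m,z)" unfolding P_def using yz my yV by auto
    then show ?thesis by blast
  next
    case False
    then have "p z < p y" using \<open>p y \<noteq> p z\<close> by linarith
    then have "P (m,y)" unfolding P_def using yz my yV by auto
    then show ?thesis by blast
  qed
  then obtain q where "P q" by blast
  then obtain q' where q': "P q'" "\<forall>r. P r \<longrightarrow> (\<lambda>(c,d). p d - p c) q' \<le> (\<lambda>(c,d). p d - p c) r"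
    using ex_has_least_nat[of P q "\<lambda>(c,d). p d - p c"] by blast
  obtain a b where qab: "q' = (a,b)" by (cases q')
  have ab: "P (a,b)" using q' qab by simp
  have abmin: "\<forall>c d. P (c,d) \<longrightarrow> p b - p a \<le> p d - p c"
  proof (intro allI impI)
    fix c d assume "P (c,d)"
    then show "p b - p a \<le> p d - p c" using q'(2) qab by fastforce
  qed
  have Eab: "E a b" and pab: "p a < p b" and inne: "\<exists>x\<in>V. p a < p x \<and> p x < p b"
    using ab unfolding P_def by auto
  have aV: "a \<in> V" "b \<in> V" using Eab EV by auto
  have key: "\<exists>lo hi. E x lo \<and> E x hi \<and> p lo < p x \<and> p x < p hi \<and> p a \<le> p lo \<and> p hi \<le> p b
       \<and> (\<forall>y. E x y \<longrightarrow> y = lo \<or> y = hi)"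
    if x: "x \<in> V" "p a < p x" "p x < p b" for x
  proof -
    have bnd: "p a \<le> p y \<and> p y \<le> p b" if "E x y" for y
    proof -
      have "\<not> (p a < p x \<and> p x < p b \<and> p b < p y)" using nc Eab that unfolding NC_def by blast
      moreover have "\<not> (p y < p a \<and> p a < p x \<and> p x < p b)" using nc Eab that sym unfolding NC_def by blast
      ultimately have "\<not> p y < p a" "\<not> p b < p y" using x by auto
      then show ?thesis by simp
    qed
    have emp: "\<not> (p y < p w \<and> p w < p x) \<and> \<not> (p x < p w \<and> p w < p y)" if "E x y" "w \<in> V" for y w
    proof
      show "\<not> (p y < p w \<and> p w < p x)"
      proof
        assume h: "p y < p w \<and> p w < p x"
        have "P (y, x)" unfolding P_def using h that sym by auto
        then have "p b - p a \<le> p x - p y" using abmin by blast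
        moreover have "p a \<le> p y" using bnd that by blast
        ultimately show False using x by linarith
      qed
      show "\<not> (p x < p w \<and> p w < p y)"
      proof
        assume h: "p x < p w \<and> p w < p y"
        have "P (x, y)" unfolding P_def using h that sym by auto
        then have "p b - p a \<le> p y - p x" using abmin by blast
        moreover have "p y \<le> p b" using bnd that by blast
        ultimately show False using x by linarith
      qed
    qed
    obtain y z where yz: "y \<noteq> z" "E x y" "E x z" using deg x by blast
    have yzV: "y \<in> V" "z \<in> V" using yz EV by auto
    have "p y \<noteq> p z" using yz yzV peq by blast
    have nxy: "p x \<noteq> p y" "p x \<noteq> p z" using pne yz by auto
    have side: "(p y < p x \<and> p x < p z) \<or> (p z < p x \<and> p x < p y)"
      using emp[OF yz(2) yzV(2)] emp[OF yz(3) yzV(1)] \<open>p y \<noteq> p z\<close> nxy by arith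
    have uniq: "w = y \<or> w = z" if "E x w" for w
    proof -
      have wV: "w \<in> V" using that EV by auto
      have "p w = p y \<or> p w = p z"
        using emp[OF that yzV(1)] emp[OF that yzV(2)] emp[OF yz(2) wV] emp[OF yz(3) wV] side pne[OF that]
        by arith
      then show ?thesis using wV yzV peq by blast
    qed
    show ?thesis using side
    proof
      assume "p y < p x \<and> p x < p z" then show ?thesis using yz uniq bnd by blast
    next
      assume "p z < p x \<and> p x < p y" then show ?thesis using yz uniq bnd by blast
    qed
  qed
  obtain x1 where x1: "x1 \<in> V \<and> p a < p x1 \<and> p x1 < p b" and x1min: "\<forall>w. w \<in> V \<and> p a < p w \<and> p w < p b \<longrightarrow> p x1 \<le> p w"
    using inne ex_has_least_nat[of "\<lambda>w. w \<in> V \<and> p a < p w \<and> p w < p b" _ p] by blast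
  obtain lo1 x2 where k1: "E x1 lo1" "E x1 x2" "p lo1 < p x1" "p x1 < p x2" "p a \<le> p lo1" "p x2 \<le> p b" "\<forall>y. E x1 y \<longrightarrow> y = lo1 \<or> y = x2"
    using key x1 by blast
  have "lo1 = a"
  proof (rule ccontr)
    assume "lo1 \<noteq> a"
    moreover have "lo1 \<in> V" using k1 EV by auto
    ultimately have "p lo1 \<noteq> p a" using aV peq by blast
    then have "p a < p lo1" using k1 by linarith
    then have "p x1 \<le> p lo1" using x1min k1 \<open>lo1 \<in> V\<close> x1 by auto
    then show False using k1 by linarith
  qed
  note k1 = k1[unfolded this]
  have x2V: "x2 \<in> V" using k1 EV by auto
  have "x2 \<noteq> b"
  proof
    assume "x2 = b"
    have "is_cycle V E [a,x1,b]" using k1 \<open>x2 = b\<close> sym Eab aV x1 by (intro cyc3) auto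
    then show False using gir unfolding girth_at_least_def by fastforce
  qed
  then have px2: "p x2 < p b" using k1 x2V aV peq by (metis nat_less_le)
  obtain lo2 x3 where k2: "E x2 lo2" "E x2 x3" "p lo2 < p x2" "p x2 < p x3" "p a \<le> p lo2" "p x3 \<le> p b" "\<forall>y. E x2 y \<longrightarrow> y = lo2 \<or> y = x3"
    using key[of x2] x2V px2 k1 x1 by auto
  have "x1 = lo2 \<or> x1 = x3" using k2(7) k1(2) sym by blast
  then have "lo2 = x1" using k2 k1 by auto
  note k2 = k2[unfolded this]
  have x3V: "x3 \<in> V" using k2 EV by auto
  have "x3 \<noteq> b"
  proof
    assume "x3 = b"
    have "is_cycle V E [a,x1,x2,b]" using k1 k2 \<open>x3 = b\<close> sym Eab aV x1 x2V by (intro cyc4) auto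
    then show False using gir unfolding girth_at_least_def by fastforce
  qed
  then have px3: "p x3 < p b" using k2 x3V aV peq by (metis nat_less_le)
  obtain lo3 x4 where k3: "E x3 lo3" "E x3 x4" "p lo3 < p x3" "p x3 < p x4" "p a \<le> p lo3" "p x4 \<le> p b" "\<forall>y. E x3 y \<longrightarrow> y = lo3 \<or> y = x4"
    using key[of x3] x3V px3 k1 k2 x1 by auto
  have "x2 = lo3 \<or> x2 = x4" using k3(7) k2(2) sym by blast
  then have "lo3 = x2" using k3 k2 by auto
  note k3 = k3[unfolded this]
  have x4V: "x4 \<in> V" using k3 EV by auto
  have "E a x1" using k1 sym by blast
  show ?thesis
  proof (cases "x4 = b")
    case True
    show ?thesis apply (rule disjI1) apply (rule exI[of _ a], rule exI[of _ x1], rule exI[of _ x2], rule exI[of _ x3], rule exI[of _ b])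
      using k1 k2 k3 Eab \<open>E a x1\<close> True by simp
  next
    case False
    then have px4: "p x4 < p b" using k3 x4V aV peq by (metis nat_less_le)
    obtain lo4 x5 where k4: "E x4 lo4" "E x4 x5" "p lo4 < p x4" "p x4 < p x5" "p a \<le> p lo4" "p x5 \<le> p b" "\<forall>y. E x4 y \<longrightarrow> y = lo4 \<or> y = x5"
      using key[of x4] x4V px4 k1 k2 k3 x1 by auto
    have "x3 = lo4 \<or> x3 = x5" using k4(7) k3(2) sym by blast
  then have "lo4 = x3" using k4 k3 by auto
    note k4 = k4[unfolded this]
    show ?thesis apply (rule disjI2) apply (rule exI[of _ a], rule exI[of _ x1], rule exI[of _ x2], rule exI[of _ x3], rule exI[of _ x4], rule exI[of _ x5])
      using k1 k2 k3 k4 \<open>E a x1\<close> by simp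
  qed
qed


definition okarc :: "nat \<Rightarrow> bool \<Rightarrow> nat \<Rightarrow> bool \<Rightarrow> bool" where
  "okarc c1 s1 c2 s2 \<longleftrightarrow> (if s1 = s2 then c2 = (c1+1) mod 3 else c1 = (c2+1) mod 3)"
definition ok :: "nat \<Rightarrow> bool \<Rightarrow> nat \<Rightarrow> bool \<Rightarrow> bool \<Rightarrow> bool" where
  "ok c1 s1 c2 s2 d \<longleftrightarrow> (if d then okarc c1 s1 c2 s2 else okarc c2 s2 c1 s1)"

lemma lt3: "(c::nat) < 3 \<longleftrightarrow> c = 0 \<or> c = 1 \<or> c = 2" by auto

lemma ex6: "(\<exists>c s. c < (3::nat) \<and> Q c s) \<longleftrightarrow> (Q 0 True \<or> Q 0 False \<or> Q 1 True \<or> Q 1 False \<or> Q 2 True \<or> Q 2 False)"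
  unfolding lt3 by (metis (full_types))

lemma two: "c0 < 3 \<Longrightarrow> c2 < 3 \<Longrightarrow>
  (\<exists>c1 s1. c1 < 3 \<and> ok c0 s0 c1 s1 d1 \<and> ok c1 s1 c2 s2 d2) \<longleftrightarrow> ((c2 = c0) = ((d1 = d2) \<noteq> (s0 = s2)))"
  apply (subst ex6)
  unfolding lt3 ok_def okarc_def
  apply (elim disjE; cases s0; cases s2; cases d1; cases d2; simp)
  done

lemma four: "c0 < 3 \<Longrightarrow> c4 < 3 \<Longrightarrow> ok c0 sa c4 sy dc \<Longrightarrow>
  \<exists>c2 s2. c2 < 3 \<and> ((c2 = c0) = ((pa = pb) \<noteq> (sa = s2))) \<and> ((c4 = c2) = ((pc = pd) \<noteq> (s2 = sy)))"
  apply (subst ex6)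
  unfolding lt3 ok_def okarc_def
  apply (elim disjE; cases sa; cases sy; cases dc; auto)
  done

lemma five: "c0 < 3 \<Longrightarrow> c5 < 3 \<Longrightarrow>
  \<exists>c2 s2. c2 < 3 \<and> ((c2 = c0) = ((pa = pb) \<noteq> (sa = s2))) \<and> (\<exists>c4 sy. c4 < 3 \<and> ((c4 = c2) = ((pc = pd) \<noteq> (s2 = sy))) \<and> ok c4 sy c5 sz pe)"
  apply (subst ex6)
  apply (subst ex6)+
  unfolding lt3 ok_def okarc_def
  apply (elim disjE; cases sa; cases sz; cases pe; auto)
  done

lemma okA: "ok c1 s1 c2 s2 (A u v) \<Longrightarrow> \<not>(A u v \<and> A v u) \<Longrightarrow> (A u v \<longrightarrow> okarc c1 s1 c2 s2) \<and> (A v u \<longrightarrow> okarc c2 s2 c1 s1)"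
  unfolding ok_def by auto

definition good :: "('a \<Rightarrow> 'a \<Rightarrow> bool) \<Rightarrow> ('a \<Rightarrow> bool) \<Rightarrow> ('a \<Rightarrow> nat) \<Rightarrow> bool" where
  "good A \<sigma> \<phi> \<longleftrightarrow> (\<forall>x. \<phi> x < 3) \<and> (\<forall>u v. A u v \<longrightarrow> okarc (\<phi> u) (\<sigma> u) (\<phi> v) (\<sigma> v))"

lemma cyc_sub: "is_cycle V' (\<lambda>u v. E u v \<and> u \<in> V' \<and> v \<in> V') cs \<Longrightarrow> V' \<subseteq> V \<Longrightarrow> is_cycle V E cs"
  unfolding is_cycle_def by auto

lemma girth_sub: "girth_at_least V E k \<Longrightarrow> V' \<subseteq> V \<Longrightarrow> girth_at_least V' (\<lambda>u v. E u v \<and> u \<in> V' \<and> v \<in> V') k"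
  unfolding girth_at_least_def using cyc_sub by blast


lemma thread4: assumes "c0 < 3" "c4 < 3" "ok c0 s0 c4 s4 dc"
  shows "\<exists>c1 s1 c2 s2 c3 s3. c1 < 3 \<and> c2 < 3 \<and> c3 < 3 \<and> ok c0 s0 c1 s1 d1 \<and> ok c1 s1 c2 s2 d2
     \<and> ok c2 s2 c3 s3 d3 \<and> ok c3 s3 c4 s4 d4"
proof -
  obtain c2 s2 where h: "c2 < 3 \<and> ((c2 = c0) = ((d1 = d2) \<noteq> (s0 = s2))) \<and> ((c4 = c2) = ((d3 = d4) \<noteq> (s2 = s4)))"
    using four[OF assms, where pa=d1 and pb=d2 and pc=d3 and pd=d4] by (elim exE) (erule that)
  obtain c1 s1 where h1: "c1 < 3 \<and> ok c0 s0 c1 s1 d1 \<and> ok c1 s1 c2 s2 d2"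
  proof -
    have "\<exists>c1 s1. c1 < 3 \<and> ok c0 s0 c1 s1 d1 \<and> ok c1 s1 c2 s2 d2" using h assms by (subst two) auto
    then show ?thesis by (elim exE) (erule that)
  qed
  obtain c3 s3 where h3: "c3 < 3 \<and> ok c2 s2 c3 s3 d3 \<and> ok c3 s3 c4 s4 d4"
  proof -
    have "\<exists>c3 s3. c3 < 3 \<and> ok c2 s2 c3 s3 d3 \<and> ok c3 s3 c4 s4 d4" using h assms by (subst two) auto
    then show ?thesis by (elim exE) (erule that)
  qed
  show ?thesis apply (rule exI[of _ c1], rule exI[of _ s1], rule exI[of _ c2], rule exI[of _ s2], rule exI[of _ c3], rule exI[of _ s3]) using h h1 h3 by simp
qed

lemma thread5: assumes "c0 < 3" "c5 < 3"
  shows "\<exists>c1 s1 c2 s2 c3 s3 c4 s4. c1 < 3 \<and> c2 < 3 \<and> c3 < 3 \<and> c4 < 3 \<and> ok c0 s0 c1 s1 d1 \<and> ok c1 s1 c2 s2 d2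
     \<and> ok c2 s2 c3 s3 d3 \<and> ok c3 s3 c4 s4 d4 \<and> ok c4 s4 c5 s5 d5"
proof -
  obtain c2 s2 c4 s4 where h: "c2 < 3 \<and> ((c2 = c0) = ((d1 = d2) \<noteq> (s0 = s2))) \<and> c4 < 3 \<and> ((c4 = c2) = ((d3 = d4) \<noteq> (s2 = s4))) \<and> ok c4 s4 c5 s5 d5"
    using five[OF assms, where pa=d1 and pb=d2 and pc=d3 and pd=d4 and pe=d5 and sa=s0 and sz=s5] by (elim exE conjE) (rule that, blast)
  obtain c1 s1 where h1: "c1 < 3 \<and> ok c0 s0 c1 s1 d1 \<and> ok c1 s1 c2 s2 d2"
  proof -
    have "\<exists>c1 s1. c1 < 3 \<and> ok c0 s0 c1 s1 d1 \<and> ok c1 s1 c2 s2 d2" using h assms by (subst two) auto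
    then show ?thesis by (elim exE) (erule that)
  qed
  obtain c3 s3 where h3: "c3 < 3 \<and> ok c2 s2 c3 s3 d3 \<and> ok c3 s3 c4 s4 d4"
  proof -
    have "\<exists>c3 s3. c3 < 3 \<and> ok c2 s2 c3 s3 d3 \<and> ok c3 s3 c4 s4 d4" using h assms by (subst two) auto
    then show ?thesis by (elim exE) (erule that)
  qed
  show ?thesis apply (rule exI[of _ c1], rule exI[of _ s1], rule exI[of _ c2], rule exI[of _ s2], rule exI[of _ c3], rule exI[of _ s3], rule exI[of _ c4], rule exI[of _ s4]) using h h1 h3 by simp
qed

lemma leaf: assumes "c < 3" shows "\<exists>c'. c' < 3 \<and> ok c s c' s d"
proof (cases d)
  case True
  then show ?thesis by (rule_tac x="(c+1) mod 3" in exI) (simp add: ok_def okarc_def)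
next
  case False
  have "c = (((c + 2) mod 3) + 1) mod 3" using assms unfolding lt3 by auto
  then show ?thesis using False by (rule_tac x="(c+2) mod 3" in exI) (simp add: ok_def okarc_def)
qed


lemma main:
  fixes V :: "'a set"
  assumes "finite V" "\<forall>u v. E u v \<longrightarrow> u \<in> V \<and> v \<in> V" "\<forall>u v. E u v \<longleftrightarrow> A u v \<or> A v u"
    "\<forall>u v. A u v \<longrightarrow> \<not> A v u" "inj_on p V" "NC p E" "girth_at_least V E 5"
  shows "\<exists>\<sigma> \<phi>. good A \<sigma> \<phi>"
  using assms
proof (induction "card V" arbitrary: V E A rule: less_induct)
  case less
  note fin = less.prems(1) and EV = less.prems(2) and EA = less.prems(3) and anti = less.prems(4)
    and inj = less.prems(5) and nc = less.prems(6) and gir = less.prems(7)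
  have sym: "\<forall>u v. E u v \<longrightarrow> E v u" using EA by blast
  have irr: "\<forall>u. \<not> E u u" using EA anti by blast
  have AV: "\<And>u v. A u v \<Longrightarrow> u \<in> V \<and> v \<in> V" using EA EV by blast
  have IH: "\<exists>\<sigma> \<phi>. good (\<lambda>u v. A u v \<and> u \<in> V' \<and> v \<in> V') \<sigma> \<phi>" if sub: "V' \<subset> V" for V'
  proof -
    have h1: "card V' < card V" using sub fin psubset_card_mono by blast
    have h2: "finite V'" using sub fin finite_subset by blast
    have h3: "\<forall>u v. (E u v \<and> u \<in> V' \<and> v \<in> V') \<longrightarrow> u \<in> V' \<and> v \<in> V'" by simp
    have h4: "\<forall>u v. (E u v \<and> u \<in> V' \<and> v \<in> V') \<longleftrightarrow> (A u v \<and> u \<in> V' \<and> v \<in> V') \<or> (A v u \<and> v \<in> V' \<and> u \<in> V')"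
      using EA by blast
    have h5: "\<forall>u v. (A u v \<and> u \<in> V' \<and> v \<in> V') \<longrightarrow> \<not> (A v u \<and> v \<in> V' \<and> u \<in> V')" using anti by blast
    have h6: "inj_on p V'" using inj sub inj_on_subset by blast
    have h7: "NC p (\<lambda>u v. E u v \<and> u \<in> V' \<and> v \<in> V')" using nc unfolding NC_def by blast
    have h8: "girth_at_least V' (\<lambda>u v. E u v \<and> u \<in> V' \<and> v \<in> V') 5" using girth_sub gir sub by blast
    show ?thesis by (rule less.hyps[OF h1 h2 h3 h4 h5 h6 h7 h8])
  qed
  show ?case
  proof (cases "\<forall>x\<in>V. \<exists>y z. y \<noteq> z \<and> E x y \<and> E x z")
    case False
    then obtain x where xV: "x \<in> V" and deg1: "\<forall>y z. E x y \<and> E x z \<longrightarrow> y = z" by blast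
    have "V - {x} \<subset> V" using xV by blast
    then obtain \<sigma> \<phi> where g: "good (\<lambda>u v. A u v \<and> u \<in> V-{x} \<and> v \<in> V-{x}) \<sigma> \<phi>" using IH by blast
    have g\<phi>: "\<forall>w. \<phi> w < 3" using g unfolding good_def by blast
    have garc: "\<And>u v. A u v \<Longrightarrow> u \<noteq> x \<Longrightarrow> v \<noteq> x \<Longrightarrow> okarc (\<phi> u) (\<sigma> u) (\<phi> v) (\<sigma> v)"
      using g AV unfolding good_def by blast
    show ?thesis
    proof (cases "\<exists>y. E x y")
      case True
      then obtain y where xy: "E x y" by blast
      have yx: "y \<noteq> x" using xy irr by auto
      obtain c where c: "c < 3" "ok (\<phi> y) (\<sigma> y) c (\<sigma> y) (A y x)" using leaf g\<phi> by blast
      define \<phi>' where "\<phi>' = \<phi>(x := c)"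
      define \<sigma>' where "\<sigma>' = \<sigma>(x := \<sigma> y)"
      have "good A \<sigma>' \<phi>'"
        unfolding good_def
      proof (intro conjI allI impI)
        fix w show "\<phi>' w < 3" using c g\<phi> \<phi>'_def by simp
      next
        fix u v assume uv: "A u v"
        show "okarc (\<phi>' u) (\<sigma>' u) (\<phi>' v) (\<sigma>' v)"
        proof (cases "u = x")
          case True
          then have "v = y" using deg1 xy uv EA by blast
          then have "\<not> A y x" using uv True anti by blast
          then show ?thesis using c(2) True \<open>v = y\<close> yx unfolding \<phi>'_def \<sigma>'_def ok_def by simp
        next
          case ux: False
          show ?thesis
          proof (cases "v = x")
            case True
            then have "u = y" using deg1 xy uv EA by blast
            then show ?thesis using c(2) True ux uv unfolding \<phi>'_def \<sigma>'_def ok_def by simp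
          next
            case False
            then show ?thesis using garc[OF uv ux False] ux unfolding \<phi>'_def \<sigma>'_def by simp
          qed
        qed
      qed
      then show ?thesis by blast
    next
      case False
      have "good A \<sigma> \<phi>" unfolding good_def
      proof (intro conjI allI impI)
        fix w show "\<phi> w < 3" using g\<phi> by simp
      next
        fix u v assume uv: "A u v"
        have "u \<noteq> x" "v \<noteq> x" using uv False EA by blast+
        then show "okarc (\<phi> u) (\<sigma> u) (\<phi> v) (\<sigma> v)" using garc uv by blast
      qed
      then show ?thesis by blast
    qed
  next
    case deg: True
    show ?thesis
    proof (cases "V = {}")
      case True
      have "good A (\<lambda>_. False) (\<lambda>_. 0)" unfolding good_def using AV True by auto
      then show ?thesis by blast
    next
      case ne: False
      from struct_lemma[OF fin EV sym irr inj nc gir deg ne]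
      show ?thesis
      proof (elim disjE exE conjE)
        fix a x1 x2 x3 b
        assume e: "E a x1" "E x1 x2" "E x2 x3" "E x3 b" "E a b"
          and o: "p a < p x1" "p x1 < p x2" "p x2 < p x3" "p x3 < p b"
          and n1: "\<forall>y. E x1 y \<longrightarrow> y = a \<or> y = x2" and n2: "\<forall>y. E x2 y \<longrightarrow> y = x1 \<or> y = x3"
          and n3: "\<forall>y. E x3 y \<longrightarrow> y = x2 \<or> y = b"
        have dist: "a \<noteq> x1" "a \<noteq> x2" "a \<noteq> x3" "b \<noteq> x1" "b \<noteq> x2" "b \<noteq> x3" "x1 \<noteq> x2" "x1 \<noteq> x3" "x2 \<noteq> x3"
          using o by auto
        have inV: "a \<in> V" "b \<in> V" "x1 \<in> V" using e EV by auto
        define V' where "V' = V - {x1,x2,x3}"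
        have "V' \<subset> V" using inV unfolding V'_def by blast
        then obtain \<sigma> \<phi> where g: "good (\<lambda>u v. A u v \<and> u \<in> V' \<and> v \<in> V') \<sigma> \<phi>" using IH by blast
        have g\<phi>: "\<forall>w. \<phi> w < 3" using g unfolding good_def by blast
        have garc: "\<And>u v. A u v \<Longrightarrow> u \<in> V' \<Longrightarrow> v \<in> V' \<Longrightarrow> okarc (\<phi> u) (\<sigma> u) (\<phi> v) (\<sigma> v)"
          using g unfolding good_def by blast
        have abV: "a \<in> V'" "b \<in> V'" using inV dist unfolding V'_def by auto
        have chord: "ok (\<phi> a) (\<sigma> a) (\<phi> b) (\<sigma> b) (A a b)"
        proof (cases "A a b")
          case True then show ?thesis using garc abV unfolding ok_def by simp
        next
          case False then have "A b a" using e EA by blast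
          then show ?thesis using garc abV False unfolding ok_def by simp
        qed
        obtain c1 s1 c2 s2 c3 s3 where t: "c1 < 3" "c2 < 3" "c3 < 3"
          "ok (\<phi> a) (\<sigma> a) c1 s1 (A a x1)" "ok c1 s1 c2 s2 (A x1 x2)" "ok c2 s2 c3 s3 (A x2 x3)" "ok c3 s3 (\<phi> b) (\<sigma> b) (A x3 b)"
          using thread4[OF _ _ chord, of "A a x1" "A x1 x2" "A x2 x3" "A x3 b"] g\<phi> by blast
        define \<phi>' where "\<phi>' = \<phi>(x1 := c1, x2 := c2, x3 := c3)"
        define \<sigma>' where "\<sigma>' = \<sigma>(x1 := s1, x2 := s2, x3 := s3)"
        have vals: "\<phi>' a = \<phi> a" "\<phi>' b = \<phi> b" "\<sigma>' a = \<sigma> a" "\<sigma>' b = \<sigma> b"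
          "\<phi>' x1 = c1" "\<phi>' x2 = c2" "\<phi>' x3 = c3" "\<sigma>' x1 = s1" "\<sigma>' x2 = s2" "\<sigma>' x3 = s3"
          using dist unfolding \<phi>'_def \<sigma>'_def by auto
        have an: "\<And>u v. \<not> (A u v \<and> A v u)" using anti by blast
        note ed1 = okA[of _ _ _ _ A a x1, OF t(4)[folded vals] an]
        note ed2 = okA[of _ _ _ _ A x1 x2, OF t(5)[folded vals] an]
        note ed3 = okA[of _ _ _ _ A x2 x3, OF t(6)[folded vals] an]
        note ed4 = okA[of _ _ _ _ A x3 b, OF t(7)[folded vals] an]
        have "good A \<sigma>' \<phi>'" unfolding good_def
        proof (intro conjI allI impI)
          fix w show "\<phi>' w < 3" using g\<phi> t unfolding \<phi>'_def by simp
        next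
          fix u v assume uv: "A u v"
          have Euv: "E u v" "E v u" using uv EA by auto
          show "okarc (\<phi>' u) (\<sigma>' u) (\<phi>' v) (\<sigma>' v)"
          proof (cases "u \<in> V' \<and> v \<in> V'")
            case True
            then have "u \<notin> {x1,x2,x3}" "v \<notin> {x1,x2,x3}" unfolding V'_def by auto
            then have "\<phi>' u = \<phi> u" "\<phi>' v = \<phi> v" "\<sigma>' u = \<sigma> u" "\<sigma>' v = \<sigma> v"
              unfolding \<phi>'_def \<sigma>'_def by auto
            then show ?thesis using garc[OF uv] True by simp
          next
            case False
            then have "u \<in> {x1,x2,x3} \<or> v \<in> {x1,x2,x3}" using AV[OF uv] unfolding V'_def by blast
            then have "(u,v) \<in> {(a,x1),(x1,a),(x1,x2),(x2,x1),(x2,x3),(x3,x2),(x3,b),(b,x3)}"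
              using n1 n2 n3 Euv by blast
            then show ?thesis using ed1 ed2 ed3 ed4 uv by auto
          qed
        qed
        then show ?thesis by blast
      next
        fix a x1 x2 x3 x4 b
        assume e: "E a x1" "E x1 x2" "E x2 x3" "E x3 x4" "E x4 b"
          and o: "p a < p x1" "p x1 < p x2" "p x2 < p x3" "p x3 < p x4" "p x4 < p b"
          and n1: "\<forall>y. E x1 y \<longrightarrow> y = a \<or> y = x2" and n2: "\<forall>y. E x2 y \<longrightarrow> y = x1 \<or> y = x3"
          and n3: "\<forall>y. E x3 y \<longrightarrow> y = x2 \<or> y = x4" and n4: "\<forall>y. E x4 y \<longrightarrow> y = x3 \<or> y = b"
        have dist: "a \<noteq> x1" "a \<noteq> x2" "a \<noteq> x3" "a \<noteq> x4" "b \<noteq> x1" "b \<noteq> x2" "b \<noteq> x3" "b \<noteq> x4"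
          "x1 \<noteq> x2" "x1 \<noteq> x3" "x1 \<noteq> x4" "x2 \<noteq> x3" "x2 \<noteq> x4" "x3 \<noteq> x4"
          using o by auto
        have inV: "a \<in> V" "b \<in> V" "x1 \<in> V" using e EV by auto
        define V' where "V' = V - {x1,x2,x3,x4}"
        have "V' \<subset> V" using inV unfolding V'_def by blast
        then obtain \<sigma> \<phi> where g: "good (\<lambda>u v. A u v \<and> u \<in> V' \<and> v \<in> V') \<sigma> \<phi>" using IH by blast
        have g\<phi>: "\<forall>w. \<phi> w < 3" using g unfolding good_def by blast
        have garc: "\<And>u v. A u v \<Longrightarrow> u \<in> V' \<Longrightarrow> v \<in> V' \<Longrightarrow> okarc (\<phi> u) (\<sigma> u) (\<phi> v) (\<sigma> v)"
          using g unfolding good_def by blast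
        obtain c1 s1 c2 s2 c3 s3 c4 s4 where t: "c1 < 3" "c2 < 3" "c3 < 3" "c4 < 3"
          "ok (\<phi> a) (\<sigma> a) c1 s1 (A a x1)" "ok c1 s1 c2 s2 (A x1 x2)" "ok c2 s2 c3 s3 (A x2 x3)" "ok c3 s3 c4 s4 (A x3 x4)"
          "ok c4 s4 (\<phi> b) (\<sigma> b) (A x4 b)"
          using thread5[of "\<phi> a" "\<phi> b" "\<sigma> a" "A a x1" "A x1 x2" "A x2 x3" "A x3 x4" "\<sigma> b" "A x4 b"] g\<phi> by blast
        define \<phi>' where "\<phi>' = \<phi>(x1 := c1, x2 := c2, x3 := c3, x4 := c4)"
        define \<sigma>' where "\<sigma>' = \<sigma>(x1 := s1, x2 := s2, x3 := s3, x4 := s4)"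
        have vals: "\<phi>' a = \<phi> a" "\<phi>' b = \<phi> b" "\<sigma>' a = \<sigma> a" "\<sigma>' b = \<sigma> b"
          "\<phi>' x1 = c1" "\<phi>' x2 = c2" "\<phi>' x3 = c3" "\<phi>' x4 = c4" "\<sigma>' x1 = s1" "\<sigma>' x2 = s2" "\<sigma>' x3 = s3" "\<sigma>' x4 = s4"
          using dist unfolding \<phi>'_def \<sigma>'_def by auto
        have an: "\<And>u v. \<not> (A u v \<and> A v u)" using anti by blast
        note ed1 = okA[of _ _ _ _ A a x1, OF t(5)[folded vals] an]
        note ed2 = okA[of _ _ _ _ A x1 x2, OF t(6)[folded vals] an]
        note ed3 = okA[of _ _ _ _ A x2 x3, OF t(7)[folded vals] an]
        note ed4 = okA[of _ _ _ _ A x3 x4, OF t(8)[folded vals] an]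
        note ed5 = okA[of _ _ _ _ A x4 b, OF t(9)[folded vals] an]
        have "good A \<sigma>' \<phi>'" unfolding good_def
        proof (intro conjI allI impI)
          fix w show "\<phi>' w < 3" using g\<phi> t unfolding \<phi>'_def by simp
        next
          fix u v assume uv: "A u v"
          have Euv: "E u v" "E v u" using uv EA by auto
          show "okarc (\<phi>' u) (\<sigma>' u) (\<phi>' v) (\<sigma>' v)"
          proof (cases "u \<in> V' \<and> v \<in> V'")
            case True
            then have "u \<notin> {x1,x2,x3,x4}" "v \<notin> {x1,x2,x3,x4}" unfolding V'_def by auto
            then have "\<phi>' u = \<phi> u" "\<phi>' v = \<phi> v" "\<sigma>' u = \<sigma> u" "\<sigma>' v = \<sigma> v"
              unfolding \<phi>'_def \<sigma>'_def by auto
            then show ?thesis using garc[OF uv] True by simp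
          next
            case False
            then have "u \<in> {x1,x2,x3,x4} \<or> v \<in> {x1,x2,x3,x4}" using AV[OF uv] unfolding V'_def by blast
            then have "(u,v) \<in> {(a,x1),(x1,a),(x1,x2),(x2,x1),(x2,x3),(x3,x2),(x3,x4),(x4,x3),(x4,b),(b,x4)}"
              using n1 n2 n3 n4 Euv by blast
            then show ?thesis using ed1 ed2 ed3 ed4 ed5 uv by auto
          qed
        qed
        then show ?thesis by blast
      qed
    qed
  qed
qed


lemma lt3_in: "x < (3::nat) \<Longrightarrow> x \<in> {0,1,2}" by auto
lemma a1: "u < (3::nat) \<Longrightarrow> u \<noteq> (u+1) mod 3" by (cases "u = 0 \<or> u = 1 \<or> u = 2") auto
lemma a2: "u < (3::nat) \<Longrightarrow> v = (u+1) mod 3 \<Longrightarrow> u \<noteq> (v+1) mod 3" by (cases "u = 0 \<or> u = 1 \<or> u = 2") auto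

lemma part1:
  fixes V :: "'a set"
  assumes sg: "simple_graph V E" and op: "outerplanar V E" and gi: "girth_at_least V E 5" and ori: "orientation V E A"
  shows "push_hom V A C3_verts C3_arcs"
proof -
  obtain f where bf: "bij_betw f V {0..<card V} \<and>
     (\<forall>a b c d. E a b \<and> E c d \<longrightarrow> \<not> (f a < f c \<and> f c < f b \<and> f b < f d))"
    using op unfolding outerplanar_def by (elim exE) (erule that)
  have bij: "bij_betw f V {0..<card V}" using bf by (rule conjunct1)
  have ncf: "\<forall>a b c d. E a b \<and> E c d \<longrightarrow> \<not> (f a < f c \<and> f c < f b \<and> f b < f d)" using bf by (rule conjunct2)
  have inj: "inj_on f V" using bij bij_betw_imp_inj_on by blast
  have nc: "NC f E" unfolding NC_def by (rule ncf)
  have fin: "finite V" and EV: "\<forall>u v. E u v \<longrightarrow> u \<in> V \<and> v \<in> V" and sym: "\<forall>u v. E u v \<longrightarrow> E v u"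
    using sg unfolding simple_graph_def by auto
  have o1: "\<forall>u v. A u v \<longrightarrow> E u v" and o2: "\<forall>u v. E u v \<longrightarrow> A u v \<or> A v u"
    using ori unfolding orientation_def by auto
  have EA: "\<forall>u v. E u v \<longleftrightarrow> A u v \<or> A v u"
  proof (intro allI iffI)
    fix u v assume "E u v" then show "A u v \<or> A v u" using o2 by blast
  next
    fix u v assume "A u v \<or> A v u" then show "E u v" using o1 sym by blast
  qed
  have anti: "\<forall>u v. A u v \<longrightarrow> \<not> A v u" using ori unfolding orientation_def by blast
  obtain \<sigma> \<phi> where g: "good A \<sigma> \<phi>" using main[OF fin EV EA anti inj nc gi] by blast
  have AV: "\<And>u v. A u v \<Longrightarrow> u \<in> V \<and> v \<in> V" using o1 EV by blast
  define S where "S = {x \<in> V. \<sigma> x}"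
  have "hom V (push S A) C3_verts C3_arcs \<phi>"
    unfolding hom_def
  proof (intro conjI allI impI)
    have g3: "\<forall>x. \<phi> x < 3" using g unfolding good_def by (rule conjunct1)
    show "\<phi> ` V \<subseteq> C3_verts"
    proof (rule image_subsetI)
      fix x show "\<phi> x \<in> C3_verts" unfolding C3_verts_def using lt3_in[of "\<phi> x"] g3 by simp
    qed
  next
    fix u v assume h: "push S A u v"
    show "C3_arcs (\<phi> u) (\<phi> v)"
    proof (cases "(u \<in> S) = (v \<in> S)")
      case True
      then have uv: "A u v" using h unfolding push_def by simp
      then have s: "\<sigma> u = \<sigma> v" using True AV[OF uv] unfolding S_def by auto
      have o: "okarc (\<phi> u) (\<sigma> u) (\<phi> v) (\<sigma> v)" "\<phi> u < 3" using g uv unfolding good_def by blast+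
      then show ?thesis using s unfolding okarc_def C3_arcs_def by simp
    next
      case False
      then have uv: "A v u" using h unfolding push_def by simp
      then have s: "\<sigma> u \<noteq> \<sigma> v" using False AV[OF uv] unfolding S_def by auto
      have o: "okarc (\<phi> v) (\<sigma> v) (\<phi> u) (\<sigma> u)" "\<phi> u < 3" using g uv unfolding good_def by blast+
      then show ?thesis using s unfolding okarc_def C3_arcs_def by auto
    qed
  qed
  moreover have "S \<subseteq> V" unfolding S_def by auto
  ultimately show ?thesis unfolding push_hom_def by blast
qed

lemma C3_oriented: "oriented_graph C3_verts C3_arcs"
  unfolding oriented_graph_def C3_verts_def C3_arcs_def using a1 a2 by auto

lemma C3_card: "card C3_verts = 3" unfolding C3_verts_def by simp

lemma chrom_le3:
  assumes "(V, E) \<in> O5" "orientation V E A"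
  shows "push_chrom V A \<le> 3"
proof -
  have "push_hom V A C3_verts C3_arcs" using part1 assms unfolding O5_def by blast
  then have "\<exists>W B. oriented_graph (W :: nat set) B \<and> card W = 3 \<and> push_hom V A W B"
    using C3_oriented C3_card by blast
  then show ?thesis unfolding push_chrom_def by (rule Least_le)
qed

lemma graph_le3:
  assumes "(V, E) \<in> O5"
  shows "push_chrom_graph V E \<le> 3"
proof (cases "{push_chrom V A | A. orientation V E A} = {}")
  case True
  then show ?thesis unfolding push_chrom_graph_def by simp
next
  case False
  then show ?thesis unfolding push_chrom_graph_def
    by (rule cSup_least) (use chrom_le3 assms in blast)
qed

definition V5 :: "nat set" where "V5 = {0..<5}"
definition E5 :: "nat \<Rightarrow> nat \<Rightarrow> bool" where
  "E5 a b \<longleftrightarrow> (a, b) \<in> {(0,1),(1,0),(1,2),(2,1),(2,3),(3,2),(3,4),(4,3),(4,0),(0,4)}"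
definition A5 :: "nat \<Rightarrow> nat \<Rightarrow> bool" where
  "A5 a b \<longleftrightarrow> (a, b) \<in> {(0,1),(1,2),(2,3),(3,4),(4,0)}"

lemma E5_simps: "E5 0 b \<longleftrightarrow> b = 1 \<or> b = 4" "E5 1 b \<longleftrightarrow> b = 0 \<or> b = 2" "E5 2 b \<longleftrightarrow> b = 1 \<or> b = 3"
  "E5 3 b \<longleftrightarrow> b = 2 \<or> b = 4" "E5 4 b \<longleftrightarrow> b = 3 \<or> b = 0" "E5 (Suc 0) b \<longleftrightarrow> b = 0 \<or> b = 2"
  unfolding E5_def by auto
lemma E5_lt: "E5 a b \<Longrightarrow> a = 0 \<or> a = 1 \<or> a = 2 \<or> a = 3 \<or> a = 4" unfolding E5_def by auto
lemma nc5: "\<forall>a b c d. E5 a b \<and> E5 c d \<longrightarrow> \<not> (id a < id c \<and> id c < id b \<and> id b < id d)"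
proof (intro allI impI)
  fix a b c d assume h: "E5 a b \<and> E5 c d"
  then have "a = 0 \<or> a = 1 \<or> a = 2 \<or> a = 3 \<or> a = 4" "c = 0 \<or> c = 1 \<or> c = 2 \<or> c = 3 \<or> c = 4" using E5_lt by auto
  then show "\<not> (id a < id c \<and> id c < id b \<and> id b < id d)" using h by (elim disjE) (auto simp: E5_simps)
qed
lemma g3: "E5 x y \<Longrightarrow> E5 y z \<Longrightarrow> E5 z x \<Longrightarrow> False"
  by (frule E5_lt[of x], elim disjE) (auto simp: E5_simps)
lemma g4: "E5 x y \<Longrightarrow> E5 y z \<Longrightarrow> E5 z w \<Longrightarrow> E5 w x \<Longrightarrow> distinct [x,y,z,w] \<Longrightarrow> False"
  by (frule E5_lt[of x], elim disjE) (auto simp: E5_simps)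

lemma V5_eq: "V5 = {0,1,2,3,4}" unfolding V5_def by auto

lemma len3: "length cs = 3 \<Longrightarrow> \<exists>x y z. cs = [x,y,z]"
  by (auto simp: length_Suc_conv eval_nat_numeral)
lemma len4: "length cs = 4 \<Longrightarrow> \<exists>x y z w. cs = [x,y,z,w]"
  by (auto simp: length_Suc_conv eval_nat_numeral)

lemma C5_girth: "girth_at_least V5 E5 5"
  unfolding girth_at_least_def
proof (intro allI impI)
  fix cs assume c: "is_cycle V5 E5 cs"
  then have d: "distinct cs" "set cs \<subseteq> V5" "length cs \<ge> 3"
    and st: "\<forall>i. Suc i < length cs \<longrightarrow> E5 (cs ! i) (cs ! Suc i)" and cl: "E5 (last cs) (hd cs)"
    unfolding is_cycle_def by auto
  have "length cs = card (set cs)" using d distinct_card by metis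
  also have "\<dots> \<le> card V5" using d by (intro card_mono) (auto simp: V5_def)
  finally have "length cs \<le> 5" unfolding V5_def by simp
  have n3: "length cs \<noteq> 3"
  proof
    assume l: "length cs = 3"
    then obtain x y z where cs: "cs = [x,y,z]" using len3 by blast
    have "E5 x y" "E5 y z" using st[rule_format, of 0] st[rule_format, of 1] cs by auto
    moreover have "E5 z x" using cl cs by simp
    ultimately show False using g3 by blast
  qed
  have n4: "length cs \<noteq> 4"
  proof
    assume l: "length cs = 4"
    then obtain x y z w where cs: "cs = [x,y,z,w]" using len4 by blast
    have "E5 x y" "E5 y z" "E5 z w" using st[rule_format, of 0] st[rule_format, of 1] st[rule_format, of 2] cs by auto
    moreover have "E5 w x" using cl cs by simp
    ultimately show False using g4 d(1) cs by blast
  qed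
  show "5 \<le> length cs" using d(3) n3 n4 by linarith
qed

lemma C5_O5: "(V5, E5) \<in> O5"
proof -
  have sg: "simple_graph V5 E5" unfolding simple_graph_def E5_def V5_def by auto
  have "bij_betw id V5 {0..<card V5}" unfolding V5_def by simp
  moreover note nc5
  ultimately have "outerplanar V5 E5" unfolding outerplanar_def by blast
  then show ?thesis unfolding O5_def using sg C5_girth by blast
qed

lemma A5_ori: "orientation V5 E5 A5" unfolding orientation_def E5_def A5_def by auto

lemma card3: "finite W \<Longrightarrow> a \<in> W \<Longrightarrow> b \<in> W \<Longrightarrow> c \<in> W \<Longrightarrow> a \<noteq> b \<Longrightarrow> b \<noteq> c \<Longrightarrow> a \<noteq> c \<Longrightarrow> 3 \<le> card W"
proof -
  assume h: "finite W" "a \<in> W" "b \<in> W" "c \<in> W" "a \<noteq> b" "b \<noteq> c" "a \<noteq> c"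
  then have "card {a,b,c} \<le> card W" by (intro card_mono) auto
  moreover have "card {a,b,c} = 3" using h by simp
  ultimately show ?thesis by simp
qed

lemma C5_lower:
  assumes "oriented_graph W B" "push_hom V5 A5 W B"
  shows "3 \<le> card W"
proof -
  obtain S \<phi> where hm: "hom V5 (push S A5) W B \<phi>" using assms(2) unfolding push_hom_def by blast
  have fin: "finite W" and noloop: "\<And>u. \<not> B u u" using assms(1) unfolding oriented_graph_def by auto
  have inW: "\<And>i. i \<in> V5 \<Longrightarrow> \<phi> i \<in> W" using hm unfolding hom_def by auto
  have nq: "\<phi> i \<noteq> \<phi> j" if "A5 i j" for i j
  proof -
    have "push S A5 i j \<or> push S A5 j i" using that unfolding push_def by auto
    then have "B (\<phi> i) (\<phi> j) \<or> B (\<phi> j) (\<phi> i)" using hm unfolding hom_def by blast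
    then show ?thesis using noloop by auto
  qed
  have q: "\<phi> 0 \<noteq> \<phi> 1" "\<phi> 1 \<noteq> \<phi> 2" "\<phi> 2 \<noteq> \<phi> 3" "\<phi> 3 \<noteq> \<phi> 4" "\<phi> 4 \<noteq> \<phi> 0"
    using nq unfolding A5_def by auto
  have w: "\<phi> 0 \<in> W" "\<phi> 1 \<in> W" "\<phi> 2 \<in> W" "\<phi> 3 \<in> W" "\<phi> 4 \<in> W" using inW unfolding V5_def by auto
  show ?thesis
  proof (cases "\<phi> 0 = \<phi> 2")
    case False then show ?thesis using card3[OF fin w(1) w(2) w(3)] q by auto
  next
    case True
    show ?thesis
    proof (cases "\<phi> 2 = \<phi> 4")
      case False then show ?thesis using card3[OF fin w(3) w(4) w(5)] q by auto
    next
      case True2: True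
      then show ?thesis using q True by auto
    qed
  qed
qed

lemma C5_chrom: "push_chrom V5 A5 = 3"
  unfolding push_chrom_def
proof (rule Least_equality)
  have "push_hom V5 A5 C3_verts C3_arcs" using part1 C5_O5 A5_ori unfolding O5_def by blast
  then show "\<exists>W B. oriented_graph (W :: nat set) B \<and> card W = 3 \<and> push_hom V5 A5 W B"
    using C3_oriented C3_card by blast
next
  fix k assume "\<exists>W B. oriented_graph (W :: nat set) B \<and> card W = k \<and> push_hom V5 A5 W B"
  then show "3 \<le> k" using C5_lower by blast
qed

lemma C5_graph: "push_chrom_graph V5 E5 = 3"
  unfolding push_chrom_graph_def
proof (rule cSup_eq_maximum)
  show "3 \<in> {push_chrom V5 A |A. orientation V5 E5 A}" using C5_chrom A5_ori by force
next
  fix x assume "x \<in> {push_chrom V5 A |A. orientation V5 E5 A}"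
  then show "x \<le> 3" using chrom_le3 C5_O5 by blast
qed

theorem theorem2:
  shows "(\<forall>(V :: 'a set) E A. simple_graph V E \<and> outerplanar V E \<and> girth_at_least V E 5
            \<and> orientation V E A \<longrightarrow> push_hom V A C3_verts C3_arcs)
         \<and> push_chrom_family O5 = 3"
proof
  show "\<forall>(V :: 'a set) E A. simple_graph V E \<and> outerplanar V E \<and> girth_at_least V E 5
            \<and> orientation V E A \<longrightarrow> push_hom V A C3_verts C3_arcs"
    using part1 by blast
  show "push_chrom_family O5 = 3"
    unfolding push_chrom_family_def
  proof (rule cSup_eq_maximum)
    show "3 \<in> {push_chrom_graph V E |V E. (V, E) \<in> O5}" using C5_graph C5_O5 by force
  next
    fix x assume "x \<in> {push_chrom_graph V E |V E. (V, E) \<in> O5}"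
    then show "x \<le> 3" using graph_le3 by blast
  qed
qed

end
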